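(* Let $G$ be a group with identity $e$, $A=\{0,1\}$, $S\subseteq G$ finite with $e\in S$, and suppose $(\mathcal P,f)$ generates a local map $\mu:A^S\to A$. Then $e$ is essential for $\mu$ if and only if there exist $z,w$ with $z\neq w$, $\mathrm{Res}_e(z)=\mathrm{Res}_e(w)$, and either $z,w\in\mathcal P^c$ or $z,w\in\mathcal P$.
   Context: $A^S$ is the set of functions $S\to A$. For $s\in S$, $\mathrm{Res}_s(z)=z|_{S\setminus\{s\}}$. An element $s\in S$ is essential for $\mu$ if there exist $z,w\in A^S$ with $\mathrm{Res}_s(z)=\mathrm{Res}_s(w)$ but $\mu(z)\neq\mu(w)$. The pair $(\mathcal P,f)$ generates $\mu$ if $\mathcal P=\{z\in A^S:\mu(z)\neq z(e)\}$ and $f:\mathcal P\to A$ is the restriction of $\mu$ to $\mathcal P$; $\mathcal P^c=A^S\setminus\mathcal P$. *)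

theory Defs
  imports "HOL-Algebra.Group" "HOL-Library.FuncSet"
begin

definition alph :: "nat set" where "alph = {0, 1}"

definition configs :: "'g set \<Rightarrow> ('g \<Rightarrow> nat) set" where
  "configs S = (S \<rightarrow>\<^sub>E alph)"

definition Res :: "'g set \<Rightarrow> 'g \<Rightarrow> ('g \<Rightarrow> nat) \<Rightarrow> ('g \<Rightarrow> nat)" where
  "Res S s z = restrict z (S - {s})"

definition essential :: "'g set \<Rightarrow> (('g \<Rightarrow> nat) \<Rightarrow> nat) \<Rightarrow> 'g \<Rightarrow> bool" where
  "essential S \<mu> s \<longleftrightarrow>
     (\<exists>z\<in>configs S. \<exists>w\<in>configs S. Res S s z = Res S s w \<and> \<mu> z \<noteq> \<mu> w)"

definition generates ::
  "'g set \<Rightarrow> 'g \<Rightarrow> ('g \<Rightarrow> nat) set \<Rightarrow> (('g \<Rightarrow> nat) \<Rightarrow> nat) \<Rightarrow> (('g \<Rightarrow> nat) \<Rightarrow> nat) \<Rightarrow> bool" where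
  "generates S e P f \<mu> \<longleftrightarrow>
     P = {z \<in> configs S. \<mu> z \<noteq> z e} \<and> f = restrict \<mu> P"

end

theory Submission
  imports Defs
begin

lemma key:
  assumes z: "z \<in> configs S" and w: "w \<in> configs S" and r: "Res S e z = Res S e w"
    and ne: "z \<noteq> w"
  shows "z e \<noteq> w e"
proof
  assume h: "z e = w e"
  have "z x = w x" for x
  proof (cases "x \<in> S - {e}")
    case True
    then show ?thesis using r unfolding Res_def by (metis restrict_apply')
  next
    case False
    then show ?thesis using h z w unfolding configs_def
      by (metis DiffI PiE_arb singletonD)
  qed
  then show False using ne by blast
qed

lemma bin: "z \<in> configs S \<Longrightarrow> x \<in> S \<Longrightarrow> z x \<in> alph"
  unfolding configs_def by auto

theorem mainTheorem6:
  fixes G (structure) and S :: "'g set" and \<mu> :: "('g \<Rightarrow> nat) \<Rightarrow> nat"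
    and P :: "('g \<Rightarrow> nat) set" and f :: "('g \<Rightarrow> nat) \<Rightarrow> nat"
  assumes "group G"
    and "S \<subseteq> carrier G" and "finite S" and "\<one> \<in> S"
    and "\<mu> \<in> configs S \<rightarrow> alph"
    and "generates S \<one> P f \<mu>"
  shows "essential S \<mu> \<one> \<longleftrightarrow>
    (\<exists>z\<in>configs S. \<exists>w\<in>configs S. z \<noteq> w \<and> Res S \<one> z = Res S \<one> w \<and>
       ((z \<in> configs S - P \<and> w \<in> configs S - P) \<or> (z \<in> P \<and> w \<in> P)))"
proof
  have Pd: "P = {z \<in> configs S. \<mu> z \<noteq> z \<one>}" using assms(6) unfolding generates_def by blast
  {
    assume "essential S \<mu> \<one>"
    then obtain z w where z: "z \<in> configs S" and w: "w \<in> configs S"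
      and r: "Res S \<one> z = Res S \<one> w" and m: "\<mu> z \<noteq> \<mu> w"
      unfolding essential_def by blast
    have ne: "z \<noteq> w" using m by blast
    have d: "z \<one> \<noteq> w \<one>" using key[OF z w r ne] .
    have "z \<one> \<in> alph" "w \<one> \<in> alph" "\<mu> z \<in> alph" "\<mu> w \<in> alph"
      using bin[OF z assms(4)] bin[OF w assms(4)] assms(5) z w by auto
    then have "(z \<in> configs S - P \<and> w \<in> configs S - P) \<or> (z \<in> P \<and> w \<in> P)"
      using d m z w unfolding Pd alph_def by auto
    then show "\<exists>z\<in>configs S. \<exists>w\<in>configs S. z \<noteq> w \<and> Res S \<one> z = Res S \<one> w \<and>
       ((z \<in> configs S - P \<and> w \<in> configs S - P) \<or> (z \<in> P \<and> w \<in> P))"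
      using z w ne r by blast
  }
  {
    assume "\<exists>z\<in>configs S. \<exists>w\<in>configs S. z \<noteq> w \<and> Res S \<one> z = Res S \<one> w \<and>
       ((z \<in> configs S - P \<and> w \<in> configs S - P) \<or> (z \<in> P \<and> w \<in> P))"
    then obtain z w where z: "z \<in> configs S" and w: "w \<in> configs S" and ne: "z \<noteq> w"
      and r: "Res S \<one> z = Res S \<one> w"
      and c: "(z \<in> configs S - P \<and> w \<in> configs S - P) \<or> (z \<in> P \<and> w \<in> P)" by blast
    have d: "z \<one> \<noteq> w \<one>" using key[OF z w r ne] .
    have "z \<one> \<in> alph" "w \<one> \<in> alph" "\<mu> z \<in> alph" "\<mu> w \<in> alph"
      using bin[OF z assms(4)] bin[OF w assms(4)] assms(5) z w by auto
    then have "\<mu> z \<noteq> \<mu> w" using d c z w unfolding Pd alph_def by auto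
    then show "essential S \<mu> \<one>" unfolding essential_def using z w r by blast
  }
qed

end
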